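(* There is a constant $c>0$ such that for all $n\in\mathbb{N}$ and all integers $k\ge 2$, the randomized query complexity of $TARSKI(n,k)$ is at least $c\cdot\frac{k\log n}{\log k}$.
   Context: For $k,n\in\mathbb{N}$ let $\mathcal{L}_n^k=\{0,1,\ldots,n-1\}^k$ with the componentwise order. $TARSKI(n,k)$: given oracle access to an unknown monotone $f:\mathcal{L}_n^k\to\mathcal{L}_n^k$ (a query of $v$ returns $f(v)$), find $x$ with $f(x)=x$. The randomized query complexity is the minimum, over randomized algorithms that on every input output a fixed point with probability at least $9/10$, of the worst-case expected number of queries (expectation over the algorithm's coins). *)

theory Defs
  imports "HOL-Probability.Probability"
begin

definition grid :: "nat \<Rightarrow> nat \<Rightarrow> nat list set" where
  "grid n k = {v. length v = k \<and> (\<forall>i<k. v ! i < n)}"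

definition leq_cw :: "nat list \<Rightarrow> nat list \<Rightarrow> bool" where
  "leq_cw v w \<longleftrightarrow> list_all2 (\<le>) v w"

text \<open>Inputs of TARSKI(n,k): monotone self-maps of the grid. Values outside the grid
  are fixed to a junk value [] so that each input is a single function.\<close>
definition tarski_inputs :: "nat \<Rightarrow> nat \<Rightarrow> (nat list \<Rightarrow> nat list) set" where
  "tarski_inputs n k = {f.
     (\<forall>v\<in>grid n k. f v \<in> grid n k) \<and>
     (\<forall>v\<in>grid n k. \<forall>w\<in>grid n k. leq_cw v w \<longrightarrow> leq_cw (f v) (f w)) \<and>
     (\<forall>v. v \<notin> grid n k \<longrightarrow> f v = [])}"

text \<open>Deterministic query algorithms = decision trees: a leaf outputs a point,
  an inner node queries a point and branches on the answer.\<close>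
datatype dtree = Leaf "nat list" | Query "nat list" "nat list \<Rightarrow> dtree"

primrec num_queries :: "dtree \<Rightarrow> (nat list \<Rightarrow> nat list) \<Rightarrow> nat" where
  "num_queries (Leaf x) f = 0"
| "num_queries (Query v g) f = Suc (num_queries (g (f v)) f)"

primrec tree_output :: "dtree \<Rightarrow> (nat list \<Rightarrow> nat list) \<Rightarrow> nat list" where
  "tree_output (Leaf x) f = x"
| "tree_output (Query v g) f = tree_output (g (f v)) f"

definition is_fixed_point :: "nat \<Rightarrow> nat \<Rightarrow> (nat list \<Rightarrow> nat list) \<Rightarrow> nat list \<Rightarrow> bool" where
  "is_fixed_point n k f x \<longleftrightarrow> x \<in> grid n k \<and> f x = x"

text \<open>Randomized algorithms = probability distributions over decision trees.
  Valid: on every input, outputs a fixed point with probability at least 9/10.\<close>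
definition valid_rand_alg :: "nat \<Rightarrow> nat \<Rightarrow> dtree pmf \<Rightarrow> bool" where
  "valid_rand_alg n k A \<longleftrightarrow>
     (\<forall>f\<in>tarski_inputs n k.
        measure_pmf.prob A {T. is_fixed_point n k f (tree_output T f)} \<ge> 9/10)"

definition expected_queries :: "dtree pmf \<Rightarrow> (nat list \<Rightarrow> nat list) \<Rightarrow> ennreal" where
  "expected_queries A f = (\<integral>\<^sup>+ T. ennreal (real (num_queries T f)) \<partial>measure_pmf A)"

definition rand_query_complexity :: "nat \<Rightarrow> nat \<Rightarrow> ennreal" where
  "rand_query_complexity n k =
     (INF A\<in>{A. valid_rand_alg n k A}. SUP f\<in>tarski_inputs n k. expected_queries A f)"

end

theory Submission
  imports Defs
begin

fun lexstep :: "nat \<Rightarrow> nat list \<Rightarrow> nat list \<Rightarrow> nat list" where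
  "lexstep n (a#xs) (b#vs) = (if b = a then b # lexstep n xs vs
      else if b < a then Suc b # replicate (length vs) 0
      else (b - 1) # replicate (length vs) (n - 1))"
| "lexstep n _ _ = []"

fun lcode :: "nat list \<Rightarrow> nat list \<Rightarrow> nat" where
  "lcode (a#xs) (b#vs) = (if b = a then (if lcode xs vs = 0 then 0 else lcode xs vs + 2)
      else if b < a then 1 else 2)"
| "lcode _ _ = 0"

fun dec :: "nat \<Rightarrow> nat \<Rightarrow> nat list \<Rightarrow> nat list" where
  "dec n c [] = []"
| "dec n c (b#vs) = (if c = 0 then b#vs else if c = 1 then Suc b # replicate (length vs) 0
     else if c = 2 then (b - 1) # replicate (length vs) (n - 1) else b # dec n (c - 2) vs)"

lemma dec0[simp]: "dec n 0 v = v"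
  by (cases v) auto

lemma lexstep_dec: "length x = length v \<Longrightarrow> lexstep n x v = dec n (lcode x v) v"
proof (induction x arbitrary: v)
  case Nil then show ?case by simp
next
  case (Cons a xs)
  then obtain b vs where v: "v = b # vs" by (cases v) auto
  with Cons show ?case
    by (cases "lcode xs vs") (auto simp: numeral_2_eq_2)
qed

lemma lcode_le: "lcode x v \<le> 2 * length v"
  by (induction x v rule: lcode.induct) auto

lemma length_lexstep: "length x = length v \<Longrightarrow> length (lexstep n x v) = length v"
  by (induction n x v rule: lexstep.induct) auto

lemma set_lexstep: "length x = length v \<Longrightarrow> set x \<subseteq> {..<n} \<Longrightarrow> set v \<subseteq> {..<n}
   \<Longrightarrow> set (lexstep n x v) \<subseteq> {..<n}"
  by (induction n x v rule: lexstep.induct) auto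

lemma lexstep_fix: "length x = length v \<Longrightarrow> lexstep n x v = v \<Longrightarrow> v = x"
  by (induction n x v rule: lexstep.induct) (auto split: if_splits)

lemma lexstep_self: "lexstep n x x = x"
  by (induction x) auto

lemma list_all2_rep_right: "list_all2 P xs (replicate (length xs) y) \<longleftrightarrow> (\<forall>z\<in>set xs. P z y)"
  by (induction xs) auto

lemma list_all2_rep_left: "list_all2 P (replicate (length xs) y) xs \<longleftrightarrow> (\<forall>z\<in>set xs. P y z)"
  by (induction xs) auto

lemma lexstep_mono: "length x = length v \<Longrightarrow> set x \<subseteq> {..<n} \<Longrightarrow> set v \<subseteq> {..<n}
   \<Longrightarrow> set w \<subseteq> {..<n} \<Longrightarrow> list_all2 (\<le>) v w
   \<Longrightarrow> list_all2 (\<le>) (lexstep n x v) (lexstep n x w)"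
proof (induction x arbitrary: v w)
  case Nil then show ?case by (cases v; cases w) auto
next
  case (Cons a xs)
  then obtain b vs c ws where v: "v = b # vs" and w: "w = c # ws"
    by (cases v; cases w) (auto simp: list_all2_Cons1)
  have lv: "length vs = length xs" "length ws = length xs"
    using Cons.prems v w by (auto dest: list_all2_lengthD)
  have bc: "b \<le> c" and vw: "list_all2 (\<le>) vs ws" using Cons.prems v w by auto
  have sv: "set (lexstep n xs vs) \<subseteq> {..<n}" using set_lexstep[of xs vs n] Cons.prems v lv by auto
  have sl: "length (lexstep n xs vs) = length ws" using length_lexstep[of xs vs n] lv by simp
  have sl2: "length (lexstep n xs ws) = length ws" using length_lexstep[of xs ws n] lv by simp
  have svs: "set vs \<subseteq> {..<n}" using Cons.prems v by auto
  show ?case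
  proof (cases "b = a")
    case True
    show ?thesis
    proof (cases "c = a")
      case True
      with \<open>b = a\<close> Cons.IH[of vs ws] Cons.prems v w lv show ?thesis by auto
    next
      case False
      then have "c > a" using bc \<open>b = a\<close> by simp
      have "list_all2 (\<le>) (lexstep n xs vs) (replicate (length (lexstep n xs vs)) (n - 1))"
        unfolding list_all2_rep_right using sv by auto
      with \<open>c > a\<close> \<open>b = a\<close> v w sl show ?thesis by auto
    qed
  next
    case False
    show ?thesis
    proof (cases "b < a")
      case True
      have "list_all2 (\<le>) (replicate (length ws) (0::nat)) (lexstep n xs ws)"
        using list_all2_rep_left[of "(\<le>)" "lexstep n xs ws" 0] sl2 by simp
      moreover have "list_all2 (\<le>) (replicate (length ws) (0::nat)) (replicate (length ws) (n-1))"
        by (induction ws) auto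
      moreover have "list_all2 (\<le>) (replicate (length ws) (0::nat)) (replicate (length ws) 0)"
        by (induction ws) auto
      ultimately show ?thesis using True \<open>b \<noteq> a\<close> bc v w lv by auto
    next
      case False
      then have "c > a" "b > a" using bc \<open>b \<noteq> a\<close> by auto
      have "list_all2 (\<le>) vs (replicate (length vs) (n - 1))"
        unfolding list_all2_rep_right using svs by auto
      then have "list_all2 (\<le>) (replicate (length vs) (n - 1)) (replicate (length vs) (n - 1))"
        by (induction vs) auto
      with \<open>c > a\<close> \<open>b > a\<close> bc v w lv show ?thesis by auto
    qed
  qed
qed


definition phi :: "nat \<Rightarrow> nat \<Rightarrow> nat list \<Rightarrow> nat list \<Rightarrow> nat list" where
  "phi n k x v = (if v \<in> grid n k then lexstep n x v else [])"

lemma grid_alt: "v \<in> grid n k \<longleftrightarrow> length v = k \<and> set v \<subseteq> {..<n}"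
  unfolding grid_def by (auto simp: in_set_conv_nth subset_iff)

lemma phi_in: "x \<in> grid n k \<Longrightarrow> phi n k x \<in> tarski_inputs n k"
  unfolding tarski_inputs_def phi_def leq_cw_def
  by (auto simp: grid_alt length_lexstep set_lexstep intro!: lexstep_mono)

lemma phi_fix: "x \<in> grid n k \<Longrightarrow> is_fixed_point n k (phi n k x) y \<Longrightarrow> y = x"
  unfolding is_fixed_point_def phi_def
  by (auto simp: grid_alt intro: lexstep_fix)

lemma phi_answers: "(\<lambda>x. phi n k x v) ` grid n k \<subseteq> (\<lambda>c. if v \<in> grid n k then dec n c v else []) ` {..2*k}"
proof
  fix y assume "y \<in> (\<lambda>x. phi n k x v) ` grid n k"
  then obtain x where x: "x \<in> grid n k" "y = phi n k x v" by auto
  show "y \<in> (\<lambda>c. if v \<in> grid n k then dec n c v else []) ` {..2*k}"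
  proof (cases "v \<in> grid n k")
    case True
    then have "y = dec n (lcode x v) v" using x by (simp add: phi_def lexstep_dec grid_alt)
    moreover have "lcode x v \<le> 2 * k" using lcode_le[of x v] True by (simp add: grid_alt)
    ultimately show ?thesis using True by auto
  next
    case False
    then show ?thesis using x by (auto simp: phi_def)
  qed
qed

lemma phi_answers_card: "card ((\<lambda>x. phi n k x v) ` grid n k) \<le> 2*k+1"
proof -
  have "card ((\<lambda>x. phi n k x v) ` grid n k) \<le> card ((\<lambda>c. if v \<in> grid n k then dec n c v else []) ` {..2*k})"
    by (rule card_mono[OF _ phi_answers]) auto
  also have "\<dots> \<le> card {..2*k}" by (rule card_image_le) auto
  finally show ?thesis by simp
qed

lemma tree_count:
  fixes \<phi> :: "'x \<Rightarrow> nat list \<Rightarrow> nat list"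
  assumes fin: "finite X" and ans: "\<And>v. card ((\<lambda>x. \<phi> x v) ` X) \<le> B" and B1: "B \<ge> 1"
  shows "card ((\<lambda>x. tree_output T (\<phi> x)) ` {x\<in>X. num_queries T (\<phi> x) \<le> m}) \<le> B ^ m"
proof (induction T arbitrary: m)
  case (Leaf y)
  have "card ((\<lambda>x. tree_output (Leaf y) (\<phi> x)) ` {x\<in>X. num_queries (Leaf y) (\<phi> x) \<le> m}) \<le> card {y}"
    by (rule card_mono) auto
  also have "\<dots> \<le> B ^ m" using B1 by simp
  finally show ?case .
next
  case (Query v g)
  show ?case
  proof (cases m)
    case 0 then show ?thesis by simp
  next
    case (Suc m')
    let ?I = "(\<lambda>x. \<phi> x v) ` X"
    let ?S = "(\<lambda>x. tree_output (Query v g) (\<phi> x)) ` {x\<in>X. num_queries (Query v g) (\<phi> x) \<le> m}"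
    have sub: "?S \<subseteq> (\<Union>a\<in>?I. (\<lambda>x. tree_output (g a) (\<phi> x)) ` {x\<in>X. num_queries (g a) (\<phi> x) \<le> m'})"
      using Suc by force
    have "card ?S \<le> card (\<Union>a\<in>?I. (\<lambda>x. tree_output (g a) (\<phi> x)) ` {x\<in>X. num_queries (g a) (\<phi> x) \<le> m'})"
      by (rule card_mono[OF _ sub]) (use fin in auto)
    also have "\<dots> \<le> (\<Sum>a\<in>?I. card ((\<lambda>x. tree_output (g a) (\<phi> x)) ` {x\<in>X. num_queries (g a) (\<phi> x) \<le> m'}))"
      by (rule card_UN_le) (use fin in auto)
    also have "\<dots> \<le> of_nat (card ?I) * B ^ m'"
      by (rule sum_bounded_above) (use Query.IH in auto)
    also have "\<dots> \<le> B * B ^ m'" using ans[of v] by simp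
    finally show ?thesis using Suc by simp
  qed
qed

lemma per_tree:
  fixes \<phi> :: "nat list \<Rightarrow> nat list \<Rightarrow> nat list"
  assumes fin: "finite X" and ans: "\<And>v. card ((\<lambda>x. \<phi> x v) ` X) \<le> B" and B1: "B \<ge> 1"
    and uniq: "\<And>x y. x \<in> X \<Longrightarrow> P x y \<Longrightarrow> y = x"
  shows "(m+1) * card {x\<in>X. P x (tree_output T (\<phi> x))}
         \<le> (\<Sum>x\<in>X. num_queries T (\<phi> x)) + (m+1) * B ^ m"
proof -
  let ?o = "\<lambda>x. tree_output T (\<phi> x)"
  let ?q = "\<lambda>x. num_queries T (\<phi> x)"
  let ?A = "{x\<in>X. P x (?o x) \<and> ?q x \<le> m}"
  let ?C = "{x\<in>X. m < ?q x}"
  have sub: "?A \<subseteq> ?o ` {x\<in>X. ?q x \<le> m}"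
  proof
    fix x assume "x \<in> ?A"
    then have "?o x = x" using uniq by auto
    then show "x \<in> ?o ` {x\<in>X. ?q x \<le> m}" using \<open>x \<in> ?A\<close> by (metis (mono_tags, lifting) image_eqI mem_Collect_eq)
  qed
  have "card ?A \<le> card (?o ` {x\<in>X. ?q x \<le> m})"
    by (rule card_mono[OF _ sub]) (use fin in auto)
  also have "card (?o ` {x\<in>X. ?q x \<le> m}) \<le> B ^ m"
    using tree_count[where X=X and B=B and \<phi>=\<phi>] fin ans B1 by blast
  finally have cA: "card ?A \<le> B ^ m" .
  have "card {x\<in>X. P x (?o x)} \<le> card (?A \<union> ?C)"
    by (rule card_mono) (use fin in auto)
  also have "\<dots> \<le> card ?A + card ?C" by (rule card_Un_le)
  finally have c1: "card {x\<in>X. P x (?o x)} \<le> B ^ m + card ?C" using cA by simp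
  have "(m+1) * card ?C = (\<Sum>x\<in>?C. m+1)" by simp
  also have "\<dots> \<le> (\<Sum>x\<in>?C. ?q x)" by (rule sum_mono) auto
  also have "\<dots> \<le> (\<Sum>x\<in>X. ?q x)" by (rule sum_mono2) (use fin in auto)
  finally have c2: "(m+1) * card ?C \<le> (\<Sum>x\<in>X. ?q x)" .
  have "(m+1) * card {x\<in>X. P x (?o x)} \<le> (m+1) * (B ^ m + card ?C)"
    using c1 by (rule mult_le_mono2)
  then show ?thesis using c2 by (simp add: algebra_simps)
qed


lemma grid_eq: "grid n k = {xs. set xs \<subseteq> {..<n} \<and> length xs = k}"
  by (auto simp: grid_alt)

lemma finite_grid: "finite (grid n k)"
  unfolding grid_eq by (rule finite_lists_length_eq) simp

lemma card_grid: "card (grid n k) = n ^ k"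
  unfolding grid_eq by (subst card_lists_length_eq) simp_all

lemma card_filter_sum: "finite G \<Longrightarrow> (of_nat (card {x\<in>G. P x}) :: ennreal) = (\<Sum>x\<in>G. indicator {y. P y} x)"
proof -
  assume "finite G"
  have "(of_nat (card {x\<in>G. P x}) :: ennreal) = (\<Sum>x\<in>{x\<in>G. P x}. 1)" by simp
  also have "\<dots> = (\<Sum>x\<in>G. if P x then 1 else 0)" using \<open>finite G\<close> by (rule sum.inter_filter)
  finally show ?thesis by (simp add: indicator_def of_bool_def)
qed

lemma alg_bound:
  assumes n1: "n \<ge> 1" and valid: "valid_rand_alg n k A"
    and hm: "2 * (2*k+1)^m \<le> n^k"
  shows "ennreal (2/5 * (real m+1)) \<le> (SUP f\<in>tarski_inputs n k. expected_queries A f)"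
proof -
  define G where "G = grid n k"
  define S where "S = (SUP f\<in>tarski_inputs n k. expected_queries A f)"
  define B where "B = 2*k+1"
  define N where "N = card G"
  have finG: "finite G" unfolding G_def by (rule finite_grid)
  have N: "N = n^k" unfolding N_def G_def by (rule card_grid)
  have Npos: "N > 0" using n1 N by simp
  let ?succ = "\<lambda>T x. is_fixed_point n k (phi n k x) (tree_output T (phi n k x))"
  have pt: "(m+1) * card {x\<in>G. ?succ T x} \<le> (\<Sum>x\<in>G. num_queries T (phi n k x)) + (m+1) * B ^ m" for T
    by (rule per_tree[OF finG]) (use phi_answers_card phi_fix in \<open>auto simp: G_def B_def\<close>)
  have pt2: "of_nat (m+1) * (\<Sum>x\<in>G. indicator {T. ?succ T x} T)
      \<le> (\<Sum>x\<in>G. ennreal (real (num_queries T (phi n k x)))) + of_nat ((m+1) * B ^ m)" for T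
  proof -
    have "of_nat (m+1) * (\<Sum>x\<in>G. indicator {T. ?succ T x} T) = (of_nat ((m+1) * card {x\<in>G. ?succ T x}) :: ennreal)"
      using card_filter_sum[OF finG, of "?succ T"] by (simp add: indicator_def distrib_right)
    also have "\<dots> \<le> of_nat ((\<Sum>x\<in>G. num_queries T (phi n k x)) + (m+1) * B ^ m)"
      using pt[of T] by (rule of_nat_mono)
    also have "\<dots> = (\<Sum>x\<in>G. ennreal (real (num_queries T (phi n k x)))) + of_nat ((m+1) * B ^ m)"
      by (simp only: of_nat_add of_nat_sum) (simp only: ennreal_of_nat_eq_real_of_nat)
    finally show ?thesis .
  qed
  have E1: "(\<integral>\<^sup>+ T. (\<Sum>x\<in>G. ennreal (real (num_queries T (phi n k x)))) \<partial>measure_pmf A)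
      = (\<Sum>x\<in>G. expected_queries A (phi n k x))"
    unfolding expected_queries_def by (rule nn_integral_sum) auto
  have E2: "(\<integral>\<^sup>+ T. of_nat ((m+1) * B ^ m) \<partial>measure_pmf A) = of_nat ((m+1) * B ^ m)"
    by (simp add: measure_pmf.emeasure_space_1)
  have "(\<integral>\<^sup>+ T. of_nat (m+1) * (\<Sum>x\<in>G. indicator {T. ?succ T x} T) \<partial>measure_pmf A)
      \<le> (\<integral>\<^sup>+ T. (\<Sum>x\<in>G. ennreal (real (num_queries T (phi n k x)))) + of_nat ((m+1) * B ^ m) \<partial>measure_pmf A)"
    by (rule nn_integral_mono) (rule pt2)
  also have "\<dots> = (\<integral>\<^sup>+ T. (\<Sum>x\<in>G. ennreal (real (num_queries T (phi n k x)))) \<partial>measure_pmf A)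
       + (\<integral>\<^sup>+ T. of_nat ((m+1) * B ^ m) \<partial>measure_pmf A)"
    by (rule nn_integral_add) auto
  also have "\<dots> = (\<Sum>x\<in>G. expected_queries A (phi n k x)) + of_nat ((m+1) * B ^ m)"
    by (simp only: E1 E2)
  also have "\<dots> \<le> of_nat N * S + of_nat ((m+1) * B ^ m)"
  proof -
    have "(\<Sum>x\<in>G. expected_queries A (phi n k x)) \<le> of_nat (card G) * S"
      by (rule sum_bounded_above) (auto simp: S_def G_def intro!: SUP_upper phi_in)
    then show ?thesis by (simp add: N_def add_right_mono)
  qed
  finally have I1: "(\<integral>\<^sup>+ T. of_nat (m+1) * (\<Sum>x\<in>G. indicator {T. ?succ T x} T) \<partial>measure_pmf A)
      \<le> of_nat N * S + of_nat ((m+1) * B ^ m)" .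
  have "(\<integral>\<^sup>+ T. of_nat (m+1) * (\<Sum>x\<in>G. indicator {T. ?succ T x} T) \<partial>measure_pmf A)
     = of_nat (m+1) * (\<Sum>x\<in>G. emeasure (measure_pmf A) {T. ?succ T x})"
    by (subst nn_integral_cmult) (auto simp: nn_integral_sum)
  also have "\<dots> \<ge> of_nat (m+1) * (\<Sum>x\<in>G. ennreal (9/10))"
  proof -
    have "emeasure (measure_pmf A) {T. ?succ T x} \<ge> ennreal (9/10)" if "x \<in> G" for x
    proof -
      have "phi n k x \<in> tarski_inputs n k" using that by (simp add: G_def phi_in)
      then have "measure_pmf.prob A {T. ?succ T x} \<ge> 9/10" using valid unfolding valid_rand_alg_def by blast
      then show ?thesis by (simp add: measure_pmf.emeasure_eq_measure)
    qed
    then show ?thesis by (intro mult_left_mono sum_mono) auto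
  qed
  finally have I2: "of_nat (m+1) * (of_nat N * ennreal (9/10)) \<le> of_nat N * S + of_nat ((m+1) * B ^ m)"
    using I1 by (simp add: N_def)
  show ?thesis
  proof (cases "S = \<top>")
    case True then show ?thesis by (simp add: S_def[symmetric])
  next
    case False
    then obtain s where s: "S = ennreal s" "s \<ge> 0" by (cases S) auto
    have hB: "real ((m+1) * B ^ m) \<le> real (m+1) * (real N / 2)"
    proof -
      have "real (2 * B^m) \<le> real N" unfolding N B_def using hm by (simp only: of_nat_le_iff)
      then have "real (B^m) \<le> real N / 2" by simp
      then show ?thesis by (simp only: of_nat_mult) (rule mult_left_mono, auto)
    qed
    have e1: "of_nat (m+1) * (of_nat N * ennreal (9/10)) = ennreal (real (m+1) * (real N * (9/10)))"
      by (simp only: ennreal_of_nat_eq_real_of_nat ennreal_mult[symmetric] of_nat_0_le_iff mult_nonneg_nonneg)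
    have e2: "of_nat N * S + of_nat ((m+1) * B ^ m) = ennreal (real N * s + real ((m+1) * B ^ m))"
      using s by (simp only: ennreal_of_nat_eq_real_of_nat ennreal_mult[symmetric] ennreal_plus[symmetric] of_nat_0_le_iff mult_nonneg_nonneg)
    from I2 have "ennreal (real (m+1) * (real N * (9/10))) \<le> ennreal (real N * s + real ((m+1) * B ^ m))"
      by (simp only: e1 e2)
    then have "real (m+1) * (real N * (9/10)) \<le> real N * s + real ((m+1) * B ^ m)"
      using s by (subst (asm) ennreal_le_iff) auto
    then have "real (m+1) * (real N * (9/10)) \<le> real N * s + real (m+1) * (real N / 2)"
      using hB by linarith
    moreover have "real (m+1) * (real N * (9/10)) = (9/10) * (real (m+1) * real N)"
      "real (m+1) * (real N / 2) = (1/2) * (real (m+1) * real N)" by simp_all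
    ultimately have "(2/5) * (real (m+1) * real N) \<le> real N * s" by linarith
    then have "real N * (2/5 * (real m + 1)) \<le> real N * s" by (simp add: algebra_simps)
    then have "2/5 * (real m + 1) \<le> s" using Npos by simp
    then show ?thesis using s by (simp add: S_def[symmetric])
  qed
qed


lemma param_facts:
  fixes n k :: nat
  assumes n2: "n \<ge> 2" and k2: "k \<ge> 2"
  defines "L \<equiv> real k * ln (real n) / ln (real (2*k+1))"
  defines "m \<equiv> nat \<lfloor>L / 2\<rfloor>"
  shows "2 * (2*k+1)^m \<le> n^k"
    and "1/15 * (real k * ln (real n) / ln (real k)) \<le> 2/5 * (real m + 1)"
proof -
  have lnB: "ln (real (2*k+1)) > 0" using k2 by simp
  have lnn: "ln (real n) \<ge> ln 2" using n2 by simp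
  have ln2: "ln (2::real) > 0" by simp
  have lnn0: "ln (real n) \<ge> 0" using lnn ln2 by linarith
  have L0: "L \<ge> 0" unfolding L_def using lnB lnn0 by (intro divide_nonneg_pos mult_nonneg_nonneg) auto
  have mL: "real m \<le> L / 2" unfolding m_def using L0 by linarith
  have mL2: "real m + 1 \<ge> L / 2" unfolding m_def using L0 by linarith
  define a where "a = real k * ln (real n) / 2"
  have a2: "a \<ge> ln 2"
  proof -
    have "real k \<ge> 2" using k2 by simp
    then have "real k * ln (real n) \<ge> 2 * ln 2" using mult_mono[of 2 "real k" "ln 2" "ln (real n)"] lnn ln2 by simp
    then show ?thesis unfolding a_def by simp
  qed
  have ep: "exp (real j * ln y) = y ^ j" if "y > 0" for y :: real and j :: nat
    using that by (simp add: exp_of_nat_mult)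
  have "real ((2*k+1)^m) = exp (real m * ln (real (2*k+1)))"
    using ep[of "real (2*k+1)" m] by simp
  also have "\<dots> \<le> exp ((L/2) * ln (real (2*k+1)))"
    using mL lnB by (intro exp_le_cancel_iff[THEN iffD2] mult_right_mono) auto
  also have "(L/2) * ln (real (2*k+1)) = a" unfolding L_def a_def using lnB by simp
  finally have p1: "real ((2*k+1)^m) \<le> exp a" .
  have nk: "real (n^k) = exp (2 * a)" unfolding a_def using n2 ep[of "real n" k] by simp
  have e2: "exp (2*a) = exp a * exp a" unfolding mult_2 by (rule exp_add)
  have "exp a \<ge> exp (ln 2)" using a2 by (simp only: exp_le_cancel_iff)
  then have ea: "exp a \<ge> 2" by simp
  have "2 * exp a \<le> exp a * exp a" using mult_right_mono[OF ea, of "exp a"] by simp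
  then have "2 * real ((2*k+1)^m) \<le> real (n^k)" using p1 nk e2 by linarith
  then have "real (2 * (2*k+1)^m) \<le> real (n^k)" by simp
  then show "2 * (2*k+1)^m \<le> n^k" unfolding of_nat_le_iff .
  have k3: "real (2*k+1) \<le> real k ^ 3"
  proof -
    have h4: "2*2 \<le> k*k" using mult_le_mono[OF k2 k2] .
    have "k*(2*2) \<le> k*(k*k)" using h4 by (rule mult_le_mono2)
    then have "2*k+1 \<le> k*(k*k)" using k2 by linarith
    then have "2*k+1 \<le> k^3" by (simp add: power3_eq_cube mult.assoc)
    then have "real (2*k+1) \<le> real (k^3)" unfolding of_nat_le_iff .
    then show ?thesis by simp
  qed
  have lnk: "ln (real (2*k+1)) \<le> 3 * ln (real k)"
  proof -
    have "ln (real (2*k+1)) \<le> ln (real k ^ 3)" using k3 k2 by (subst ln_le_cancel_iff) auto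
    also have "\<dots> = 3 * ln (real k)" using k2 by (simp add: ln_realpow)
    finally show ?thesis .
  qed
  have lk: "ln (real k) > 0" using k2 by simp
  have X0: "real k * ln (real n) \<ge> 0" using lnn0 by simp
  have "1/15 * (real k * ln (real n) / ln (real k)) = (real k * ln (real n)) / (15 * ln (real k))" by simp
  also have "\<dots> \<le> (real k * ln (real n)) / (5 * ln (real (2*k+1)))"
    using lnk lnB X0 lk by (intro divide_left_mono) (auto intro: mult_pos_pos)
  also have "\<dots> = (2/5) * (L/2)" unfolding L_def by simp
  also have "\<dots> \<le> 2/5 * (real m + 1)" using mL2 by simp
  finally show "1/15 * (real k * ln (real n) / ln (real k)) \<le> 2/5 * (real m + 1)" .
qed


theorem proposition9:
  shows "\<exists>c::real. c > 0 \<and>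
    (\<forall>n k::nat. n \<ge> 1 \<longrightarrow> k \<ge> 2 \<longrightarrow>
       ennreal (c * (real k * ln (real n) / ln (real k))) \<le> rand_query_complexity n k)"
proof (intro exI[of _ "1/15"] conjI allI impI)
  show "(0::real) < 1/15" by simp
next
  fix n k :: nat
  assume n1: "n \<ge> 1" and k2: "k \<ge> 2"
  show "ennreal (1/15 * (real k * ln (real n) / ln (real k))) \<le> rand_query_complexity n k"
  proof (cases "n = 1")
    case True then show ?thesis by simp
  next
    case False
    then have n2: "n \<ge> 2" using n1 by simp
    define L where "L = real k * ln (real n) / ln (real (2*k+1))"
    define m where "m = nat \<lfloor>L / 2\<rfloor>"
    have hm: "2 * (2*k+1)^m \<le> n^k" and hc: "1/15 * (real k * ln (real n) / ln (real k)) \<le> 2/5 * (real m + 1)"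
      using param_facts[OF n2 k2] unfolding L_def m_def by auto
    show ?thesis
      unfolding rand_query_complexity_def
    proof (rule INF_greatest)
      fix A assume "A \<in> {A. valid_rand_alg n k A}"
      then have "ennreal (2/5 * (real m + 1)) \<le> (SUP f\<in>tarski_inputs n k. expected_queries A f)"
        using alg_bound[OF n1 _ hm] by auto
      moreover have "ennreal (1/15 * (real k * ln (real n) / ln (real k))) \<le> ennreal (2/5 * (real m + 1))"
        using hc by (rule ennreal_leI)
      ultimately show "ennreal (1/15 * (real k * ln (real n) / ln (real k))) \<le> (SUP f\<in>tarski_inputs n k. expected_queries A f)"
        by (rule order_trans[rotated])
    qed
  qed
qed

end
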